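(* Let $\alpha>-1$ and let $\phi(w)=aw+b$ with $a\in(0,1)$ and $\mathrm{Re}(b)\ge 0$. For each $f\in\mathcal{A}^2_\alpha(\mathbb{C}_+)$ there exists $\delta>0$ such that $\|C_\phi^n f\|\ge \delta\, a^{-\frac{\alpha+2}{2}n}\|f\|$ for all sufficiently large $n\in\mathbb{N}$.
   Context: $\mathbb{C}_+=\{z\in\mathbb{C}:\mathrm{Re}(z)>0\}$. For $\alpha>-1$, $\mathcal{A}^2_\alpha(\mathbb{C}_+)$ is the Hilbert space of analytic $f:\mathbb{C}_+\to\mathbb{C}$ with $\|f\|^2=\frac{1}{\pi}\int_{-\infty}^{\infty}\int_0^\infty |f(x+iy)|^2x^\alpha\,dx\,dy<\infty$. $C_\phi f=f\circ\phi$ is the composition operator (bounded on this space for such $\phi$), and $C_\phi^n$ denotes its $n$-th power. *)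

theory Defs
  imports "HOL-Analysis.Analysis"
begin

definition right_half_plane :: "complex set" where
  "right_half_plane = {z. Re z > 0}"

text \<open>Squared weighted Bergman integral (1/pi) \<integral>\<integral> |f(x+iy)|^2 x^alpha dx dy,
  as an extended nonnegative real; lborel on complex is Lebesgue measure on R^2
  in the coordinates (Re z, Im z).\<close>
definition bergman_nn :: "real \<Rightarrow> (complex \<Rightarrow> complex) \<Rightarrow> ennreal" where
  "bergman_nn \<alpha> f =
     ennreal (1 / pi) * (\<integral>\<^sup>+ z \<in> right_half_plane. ennreal ((cmod (f z))\<^sup>2 * (Re z) powr \<alpha>) \<partial>lborel)"

definition bergman_space :: "real \<Rightarrow> (complex \<Rightarrow> complex) set" where
  "bergman_space \<alpha> = {f. f holomorphic_on right_half_plane \<and> bergman_nn \<alpha> f < \<infinity>}"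

definition bergman_norm :: "real \<Rightarrow> (complex \<Rightarrow> complex) \<Rightarrow> real" where
  "bergman_norm \<alpha> f = sqrt (enn2real (bergman_nn \<alpha> f))"

definition comp_op :: "(complex \<Rightarrow> complex) \<Rightarrow> (complex \<Rightarrow> complex) \<Rightarrow> (complex \<Rightarrow> complex)" where
  "comp_op \<phi> f = f \<circ> \<phi>"

end

theory Submission
  imports Defs "HOL-Complex_Analysis.Complex_Analysis"
begin

lemma measurable_Complex[measurable]:
  assumes [measurable]: "f \<in> borel_measurable M" "g \<in> borel_measurable M"
  shows "(\<lambda>x. Complex (f x) (g x)) \<in> borel_measurable M"
proof -
  have "(\<lambda>x. Complex (f x) (g x)) = (\<lambda>x. complex_of_real (f x) + \<i> * complex_of_real (g x))"
    by (auto simp: complex_eq_iff)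
  then show ?thesis by simp
qed

lemma lborel_complex:
  "(lborel :: complex measure) = distr (lborel \<Otimes>\<^sub>M lborel) borel (\<lambda>p. Complex (fst p) (snd p))"
proof (rule lborel_eqI)
  fix l u :: complex
  assume le: "\<And>b. b \<in> Basis \<Longrightarrow> l \<bullet> b \<le> u \<bullet> b"
  have "(\<lambda>p. Complex (fst p) (snd p)) -` box l u = box (Re l) (Re u) \<times> box (Im l) (Im u)"
    by (auto simp: in_box_complex_iff)
  then have "emeasure (distr (lborel \<Otimes>\<^sub>M lborel) borel (\<lambda>p. Complex (fst p) (snd p))) (box l u)
     = emeasure (lborel \<Otimes>\<^sub>M lborel) (box (Re l) (Re u) \<times> box (Im l) (Im u))"
    by (subst emeasure_distr) (auto simp: space_pair_measure)
  also have "\<dots> = ennreal (Re u - Re l) * ennreal (Im u - Im l)"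
    using le[of 1] le[of \<i>]
    by (simp add: lborel.emeasure_pair_measure_Times)
  also have "\<dots> = (\<Prod>b\<in>Basis. (u - l) \<bullet> b)"
    using le[of 1] le[of \<i>] by (simp add: Basis_complex_def ennreal_mult)
  finally show "emeasure (distr (lborel \<Otimes>\<^sub>M lborel) borel (\<lambda>p. Complex (fst p) (snd p))) (box l u) = (\<Prod>b\<in>Basis. (u - l) \<bullet> b)" .
qed simp

lemma nn_integral_complex:
  fixes g :: "complex \<Rightarrow> ennreal"
  assumes [measurable]: "g \<in> borel_measurable borel"
  shows "(\<integral>\<^sup>+z. g z \<partial>lborel) = (\<integral>\<^sup>+x. \<integral>\<^sup>+y. g (Complex x y) \<partial>lborel \<partial>lborel)"
proof -
  have "(\<integral>\<^sup>+z. g z \<partial>lborel) = (\<integral>\<^sup>+p. g (Complex (fst p) (snd p)) \<partial>(lborel \<Otimes>\<^sub>M lborel))"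
    by (subst lborel_complex) (simp add: nn_integral_distr)
  also have "\<dots> = (\<integral>\<^sup>+x. \<integral>\<^sup>+y. g (Complex x y) \<partial>lborel \<partial>lborel)"
    using lborel.nn_integral_fst[where f="\<lambda>p. g (Complex (fst p) (snd p))"] by simp
  finally show ?thesis .
qed

lemma meas_ind:
  fixes g :: "complex \<Rightarrow> real"
  assumes "open S" "continuous_on S g"
  shows "(\<lambda>z. ennreal (g z) * indicator S z) \<in> borel_measurable borel"
proof -
  have "(\<lambda>z. indicator S z *\<^sub>R g z) \<in> borel_measurable borel"
    using assms by (intro borel_measurable_continuous_on_indicator) auto
  then have "(\<lambda>z. ennreal (indicator S z *\<^sub>R g z)) \<in> borel_measurable borel" by simp
  moreover have "(\<lambda>z. ennreal (indicator S z *\<^sub>R g z)) = (\<lambda>z. ennreal (g z) * indicator S z)"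
    by (auto simp: indicator_def fun_eq_iff)
  ultimately show ?thesis by simp
qed

lemma open_halfplane: "open {z::complex. c < Re z}"
  by (simp add: open_halfspace_Re_gt)

lemma rhp_eq: "right_half_plane = {z. 0 < Re z}"
  by (simp add: right_half_plane_def)

lemma iter_comp: "(comp_op \<phi> ^^ n) f = (\<lambda>w. f ((\<phi> ^^ n) w))"
proof (induction n)
  case 0 then show ?case by simp
next
  case (Suc n)
  have "(comp_op \<phi> ^^ Suc n) f = comp_op \<phi> ((comp_op \<phi> ^^ n) f)" by simp
  also have "\<dots> = (\<lambda>w. f ((\<phi> ^^ n) (\<phi> w)))"
  proof -
    have e: "comp_op \<phi> g = (\<lambda>w. g (\<phi> w))" for g by (simp add: comp_op_def comp_def)
    show ?thesis by (simp only: e Suc)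
  qed
  also have "\<dots> = (\<lambda>w. f ((\<phi> ^^ Suc n) w))" by (simp add: funpow_swap1)
  finally show ?case .
qed

lemma iter_affine:
  fixes a :: real and b :: complex
  shows "((\<lambda>w. complex_of_real a * w + b) ^^ n) w = complex_of_real (a ^ n) * w + ((\<lambda>w. complex_of_real a * w + b) ^^ n) 0"
proof (induction n)
  case 0 then show ?case by simp
next
  case (Suc n)
  show ?case
    by (simp only: funpow.simps comp_def Suc) (simp add: algebra_simps)
qed

lemma iter_affine_Re:
  fixes a :: real and b :: complex
  assumes "0 < a" "a < 1" "0 \<le> Re b"
  shows "0 \<le> Re (((\<lambda>w. complex_of_real a * w + b) ^^ n) 0) \<and>
         Re (((\<lambda>w. complex_of_real a * w + b) ^^ n) 0) \<le> Re b / (1 - a)"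
proof (induction n)
  case 0 then show ?case using assms by simp
next
  case (Suc n)
  define r where "r = Re (((\<lambda>w. complex_of_real a * w + b) ^^ n) 0)"
  have e: "Re (((\<lambda>w. complex_of_real a * w + b) ^^ Suc n) 0) = a * r + Re b"
    by (simp add: r_def)
  have "0 \<le> r" "r \<le> Re b / (1 - a)" using Suc by (auto simp: r_def)
  then have "a * r \<le> a * (Re b / (1 - a))" using assms by (intro mult_left_mono) auto
  moreover have "a * (Re b / (1 - a)) + Re b = Re b / (1 - a)" using assms by (simp add: field_simps)
  ultimately show ?case unfolding e using assms \<open>0 \<le> r\<close> by auto
qed

lemma bergman_affine:
  fixes A \<alpha> :: real and D :: complex and f :: "complex \<Rightarrow> complex"
  assumes A: "0 < A" and D: "0 \<le> Re D" and hol: "f holomorphic_on right_half_plane"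
  shows "bergman_nn \<alpha> (\<lambda>w. f (complex_of_real A * w + D)) =
    ennreal (1 / pi) * (ennreal (A powr (-(\<alpha>+2))) *
      (\<integral>\<^sup>+z. ennreal ((cmod (f z))\<^sup>2 * (Re z - Re D) powr \<alpha>) * indicator {z. Re D < Re z} z \<partial>lborel))"
proof -
  let ?H = "{z::complex. 0 < Re z}"
  let ?h = "\<lambda>w. ennreal ((cmod (f (complex_of_real A * w + D)))\<^sup>2 * Re w powr \<alpha>) * indicator ?H w"
  have cf: "continuous_on ?H f" using hol holomorphic_on_imp_continuous_on by (simp add: rhp_eq)
  have "continuous_on ?H (\<lambda>w. complex_of_real A * w + D)" by (intro continuous_intros)
  moreover have "(\<lambda>w. complex_of_real A * w + D) ` ?H \<subseteq> ?H" using A D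
    by (auto intro!: add_pos_nonneg)
  ultimately have "continuous_on ?H (\<lambda>w. f (complex_of_real A * w + D))"
    using continuous_on_compose2[OF cf] by blast
  then have "continuous_on ?H (\<lambda>w. (cmod (f (complex_of_real A * w + D)))\<^sup>2 * Re w powr \<alpha>)"
    by (intro continuous_intros) auto
  then have hm: "?h \<in> borel_measurable borel"
    by (intro meas_ind open_halfplane)
  have "bergman_nn \<alpha> (\<lambda>w. f (complex_of_real A * w + D)) = ennreal (1/pi) * (\<integral>\<^sup>+w. ?h w \<partial>lborel)"
    by (simp add: bergman_nn_def rhp_eq)
  also have "(\<integral>\<^sup>+w. ?h w \<partial>lborel) = (\<integral>\<^sup>+x. ennreal (\<bar>1/A\<bar> ^ DIM(complex)) * ?h (- D / complex_of_real A + (1/A) *\<^sub>R x) \<partial>lborel)"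
    using hm
    by (subst lborel_affine[where c="1/A" and t="- D / complex_of_real A"]) (use A in \<open>simp_all add: nn_integral_density nn_integral_distr\<close>)
  also have "\<dots> = (\<integral>\<^sup>+z. ennreal (A powr (-(\<alpha>+2))) * (ennreal ((cmod (f z))\<^sup>2 * (Re z - Re D) powr \<alpha>) * indicator {z. Re D < Re z} z) \<partial>lborel)"
  proof (rule nn_integral_cong)
    fix z :: complex
    have w: "- D / complex_of_real A + (1/A) *\<^sub>R z = (z - D) / complex_of_real A"
      using A by (simp add: scaleR_conv_of_real field_simps)
    have fz: "complex_of_real A * ((z - D) / complex_of_real A) + D = z" using A by (simp add: field_simps)
    have re: "Re ((z - D) / complex_of_real A) = (Re z - Re D) / A" by simp
    have ind: "indicator ?H ((z - D) / complex_of_real A) = (indicator {z. Re D < Re z} z :: ennreal)"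
      using A by (simp add: re indicator_def zero_less_divide_iff)
    show "ennreal (\<bar>1/A\<bar> ^ DIM(complex)) * ?h (- D / complex_of_real A + (1/A) *\<^sub>R z) =
       ennreal (A powr (-(\<alpha>+2))) * (ennreal ((cmod (f z))\<^sup>2 * (Re z - Re D) powr \<alpha>) * indicator {z. Re D < Re z} z)"
    proof (cases "Re D < Re z")
      case False then show ?thesis unfolding w fz ind by simp
    next
      case True
      have p: "((Re z - Re D) / A) powr \<alpha> = (Re z - Re D) powr \<alpha> * A powr (-\<alpha>)"
      proof -
        have "((Re z - Re D) / A) powr \<alpha> = (Re z - Re D) powr \<alpha> / A powr \<alpha>"
          using True A by (simp add: powr_divide)
        then show ?thesis by (simp add: powr_minus divide_inverse)
      qed
      have q: "\<bar>1/A\<bar> ^ DIM(complex) * (A powr (-\<alpha>)) = A powr (-(\<alpha>+2))"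
      proof -
        have "A powr (-(\<alpha>+2)) = A powr (-\<alpha>) * A powr (-2)"
          by (simp add: powr_add[symmetric])
        moreover have "A powr (-2) = (1/A)^2" using A
          by (simp add: powr_minus powr_numeral divide_inverse power_inverse)
        ultimately show ?thesis using A by simp
      qed
      have "\<bar>1/A\<bar> ^ DIM(complex) * ((cmod (f z))\<^sup>2 * ((Re z - Re D) / A) powr \<alpha>) =
            A powr (-(\<alpha>+2)) * ((cmod (f z))\<^sup>2 * (Re z - Re D) powr \<alpha>)"
        unfolding p q[symmetric] by (simp add: algebra_simps)
      then show ?thesis unfolding w fz ind re using True A
        by (simp add: ennreal_mult'[symmetric] ennreal_mult[symmetric])
    qed
  qed
  also have "\<dots> = ennreal (A powr (-(\<alpha>+2))) *
      (\<integral>\<^sup>+z. ennreal ((cmod (f z))\<^sup>2 * (Re z - Re D) powr \<alpha>) * indicator {z. Re D < Re z} z \<partial>lborel)"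
  proof (rule nn_integral_cmult)
    have "continuous_on {z. Re D < Re z} f" using D by (intro continuous_on_subset[OF cf]) auto
    then have "continuous_on {z. Re D < Re z} (\<lambda>z. (cmod (f z))\<^sup>2 * (Re z - Re D) powr \<alpha>)"
      by (intro continuous_intros) auto
    then show "(\<lambda>z. ennreal ((cmod (f z))\<^sup>2 * (Re z - Re D) powr \<alpha>) * indicator {z. Re D < Re z} z) \<in> borel_measurable lborel"
      using meas_ind[OF open_halfplane] by simp
  qed
  finally show ?thesis .
qed

lemma line_bound:
  fixes h :: "complex \<Rightarrow> complex" and G :: "complex \<Rightarrow> real"
  assumes ch: "continuous_on (closed_segment p q) h" and cG: "continuous_on (closed_segment p q) G"
    and d: "0 < d" and le: "\<And>w. w \<in> closed_segment p q \<Longrightarrow> d * norm (h w) \<le> G w"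
  shows "ennreal (d * norm (contour_integral (linepath p q) h)) \<le>
     ennreal (cmod (q - p)) * (\<integral>\<^sup>+t. ennreal (G (linepath p q t)) * indicator {0..1} t \<partial>lborel)"
proof -
  have "h contour_integrable_on linepath p q" by (rule contour_integrable_continuous_linepath[OF ch])
  then have hi: "((\<lambda>x. h (linepath p q x) * (q - p)) has_integral contour_integral (linepath p q) h) {0..1}"
    using has_contour_integral_integral has_contour_integral_linepath by blast
  have img: "linepath p q ` {0..1} = closed_segment p q"
    using path_image_linepath[of p q] unfolding path_image_def by simp
  have cg: "continuous_on {0..1} (\<lambda>t. G (linepath p q t))"
    using continuous_on_compose2[OF cG continuous_on_linepath] img by blast
  have gi: "((\<lambda>t. G (linepath p q t) / d * cmod (q - p)) has_integral
      integral {0..1} (\<lambda>t. G (linepath p q t)) / d * cmod (q - p)) {0..1}"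
    using integrable_continuous_interval[OF cg]
    by (intro has_integral_mult_left has_integral_divide) (simp add: integrable_integral)
  have Gnn: "t \<in> {0..1} \<Longrightarrow> 0 \<le> G (linepath p q t)" for t
  proof -
    assume "t \<in> {0..1}"
    then have "linepath p q t \<in> closed_segment p q" using img by blast
    from le[OF this] show ?thesis using d by (meson mult_nonneg_nonneg norm_ge_zero order_trans less_imp_le)
  qed
  have "norm (contour_integral (linepath p q) h) \<le> integral {0..1} (\<lambda>t. G (linepath p q t)) / d * cmod (q - p)"
  proof -
   have "norm (integral {0..1} (\<lambda>x. h (linepath p q x) * (q - p))) \<le> integral {0..1} (\<lambda>t. G (linepath p q t) / d * cmod (q - p))"
   proof (rule integral_norm_bound_integral)
    show "(\<lambda>x. h (linepath p q x) * (q - p)) integrable_on {0..1}" using hi by blast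
    show "(\<lambda>t. G (linepath p q t) / d * cmod (q - p)) integrable_on {0..1}" using gi by blast
    fix t :: real assume t: "t \<in> {0..1}"
    then have "linepath p q t \<in> closed_segment p q" using img by blast
    from le[OF this] have "norm (h (linepath p q t)) \<le> G (linepath p q t) / d"
      using d by (simp add: field_simps)
    then show "norm (h (linepath p q t) * (q - p)) \<le> G (linepath p q t) / d * cmod (q - p)"
      unfolding norm_mult by (rule mult_right_mono) auto
   qed
   then show ?thesis using integral_unique[OF hi] integral_unique[OF gi] by simp
  qed
  then have "d * norm (contour_integral (linepath p q) h) \<le> cmod (q - p) * integral {0..1} (\<lambda>t. G (linepath p q t))"
    using d by (simp add: field_simps)
  then have "ennreal (d * norm (contour_integral (linepath p q) h)) \<le> ennreal (cmod (q - p) * integral {0..1} (\<lambda>t. G (linepath p q t)))"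
    by (rule ennreal_leI)
  also have "\<dots> = ennreal (cmod (q - p)) * ennreal (integral {0..1} (\<lambda>t. G (linepath p q t)))"
    by (rule ennreal_mult') simp
  also have "ennreal (integral {0..1} (\<lambda>t. G (linepath p q t))) = (\<integral>\<^sup>+t. ennreal (G (linepath p q t)) * indicator {0..1} t \<partial>lborel)"
    using integrable_continuous_interval[OF cg] Gnn
    by (intro nn_integral_has_integral_lebesgue'[symmetric]) (auto simp: integrable_integral)
  finally show ?thesis .
qed

lemma pointwise:
  fixes f :: "complex \<Rightarrow> complex"
  assumes hol: "f holomorphic_on {w. 0 < Re w}" and x1: "0 < x1" "x1 < x" "x < x2"
    and d: "0 < d" "d \<le> x - x1" "d \<le> x2 - x" "d \<le> 1"
  shows "ennreal (2*pi*d*(cmod (f (Complex x y)))\<^sup>2) \<le>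
     ennreal (x2 - x1) * (\<integral>\<^sup>+t. ennreal ((cmod (f (Complex ((1-t)*x1 + t*x2) (y-1))))\<^sup>2) * indicator {0..1} t \<partial>lborel)
   + ennreal 2 * (\<integral>\<^sup>+t. ennreal ((cmod (f (Complex x2 ((1-t)*(y-1) + t*(y+1)))))\<^sup>2) * indicator {0..1} t \<partial>lborel)
   + ennreal (x2 - x1) * (\<integral>\<^sup>+t. ennreal ((cmod (f (Complex ((1-t)*x2 + t*x1) (y+1))))\<^sup>2) * indicator {0..1} t \<partial>lborel)
   + ennreal 2 * (\<integral>\<^sup>+t. ennreal ((cmod (f (Complex x1 ((1-t)*(y+1) + t*(y-1)))))\<^sup>2) * indicator {0..1} t \<partial>lborel)"
proof -
  define a1 where "a1 = Complex x1 (y-1)"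
  define a2 where "a2 = Complex x2 (y-1)"
  define a3 where "a3 = Complex x2 (y+1)"
  define a4 where "a4 = Complex x1 (y+1)"
  define z where "z = Complex x y"
  define H where "H = {w::complex. 0 < Re w}"
  define g where "g = (\<lambda>w. f w ^ 2 / (w - z))"
  define G where "G = (\<lambda>w. (cmod (f w))\<^sup>2)"
  define P where "P = path_image (rectpath a1 a3)"
  have P: "P = {w. Re w \<in> {x1,x2} \<and> Im w \<in> {y-1..y+1}} \<union> {w. Im w \<in> {y-1,y+1} \<and> Re w \<in> {x1..x2}}"
    unfolding P_def using x1 by (subst path_image_rectpath) (auto simp: a1_def a3_def)
  have Pprop: "0 < Re w \<and> d \<le> cmod (w - z)" if "w \<in> P" for w
  proof -
    from that consider "Re w = x1 \<or> Re w = x2" "Im w \<in> {y-1..y+1}" | "Im w = y-1 \<or> Im w = y+1" "Re w \<in> {x1..x2}"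
      unfolding P by auto
    then show ?thesis
    proof cases
      case 1
      have "d \<le> \<bar>Re (w - z)\<bar>" using 1 d by (auto simp: z_def)
      also have "\<dots> \<le> cmod (w - z)" by (rule abs_Re_le_cmod)
      finally show ?thesis using 1 x1 by auto
    next
      case 2
      have "d \<le> \<bar>Im (w - z)\<bar>" using 2 d by (auto simp: z_def)
      also have "\<dots> \<le> cmod (w - z)" by (rule abs_Im_le_cmod)
      finally show ?thesis using 2 x1 by auto
    qed
  qed
  have Psegs: "P = closed_segment a1 a2 \<union> closed_segment a2 a3 \<union> closed_segment a3 a4 \<union> closed_segment a4 a1"
    unfolding P_def by (simp add: rectpath_def Let_def path_image_join a1_def a2_def a3_def a4_def Un_assoc)
  have PH: "P \<subseteq> H - {z}" using Pprop d unfolding H_def by force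
  have cfH: "continuous_on H f" using hol holomorphic_on_imp_continuous_on unfolding H_def by blast
  have cg: "continuous_on (H - {z}) g" unfolding g_def
    by (intro continuous_intros continuous_on_subset[OF cfH]) auto
  have cG: "continuous_on H G" unfolding G_def by (intro continuous_intros cfH)
  have bnd: "d * norm (g w) \<le> G w" if "w \<in> P" for w
  proof -
    have "d \<le> cmod (w - z)" using Pprop[OF that] by blast
    then have "d * (cmod (f w))\<^sup>2 \<le> cmod (w - z) * (cmod (f w))\<^sup>2" by (rule mult_right_mono) simp
    moreover have "0 < cmod (w - z)" using d \<open>d \<le> cmod (w - z)\<close> by linarith
    ultimately show ?thesis unfolding g_def G_def by (simp add: norm_divide norm_power field_simps)
  qed
  have hol2: "(\<lambda>w. f w ^ 2) holomorphic_on H" using hol unfolding H_def by (intro holomorphic_intros)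
  have zbox: "z \<in> box a1 a3" using x1 d by (simp add: in_box_complex_iff a1_def a3_def z_def)
  have "((\<lambda>w. f w ^ 2 / (w - z)) has_contour_integral (2*pi*\<i> * winding_number (rectpath a1 a3) z * f z ^ 2)) (rectpath a1 a3)"
    using PH x1 unfolding P_def H_def
    by (intro Cauchy_integral_formula_convex_simple[OF convex_halfspace_Re_gt hol2[unfolded H_def]])
       (auto simp: interior_open open_halfspace_Re_gt z_def)
  then have ci: "contour_integral (rectpath a1 a3) g = 2*pi*\<i> * f z ^ 2"
    using winding_number_rectpath[OF zbox] unfolding g_def by (simp add: contour_integral_unique)
  have segc: "continuous_on (closed_segment p q) g" "continuous_on (closed_segment p q) G"
    if "closed_segment p q \<subseteq> P" for p q
    using that PH by (auto intro: continuous_on_subset[OF cg] continuous_on_subset[OF cG])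
  have s12: "closed_segment a1 a2 \<subseteq> P" and s23: "closed_segment a2 a3 \<subseteq> P"
    and s34: "closed_segment a3 a4 \<subseteq> P" and s41: "closed_segment a4 a1 \<subseteq> P"
    using Psegs by auto
  have int: "g contour_integrable_on linepath p q" if "closed_segment p q \<subseteq> P" for p q
    by (rule contour_integrable_continuous_linepath[OF segc(1)[OF that]])
  have sum: "contour_integral (rectpath a1 a3) g = contour_integral (linepath a1 a2) g + contour_integral (linepath a2 a3) g
      + contour_integral (linepath a3 a4) g + contour_integral (linepath a4 a1) g"
    using int[OF s12] int[OF s23] int[OF s34] int[OF s41]
    by (simp add: rectpath_def Let_def a1_def a2_def a3_def a4_def)
  have lb: "ennreal (d * norm (contour_integral (linepath p q) g)) \<le>
     ennreal (cmod (q - p)) * (\<integral>\<^sup>+t. ennreal (G (linepath p q t)) * indicator {0..1} t \<partial>lborel)"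
    if "closed_segment p q \<subseteq> P" for p q
    using segc[OF that] d that bnd by (intro line_bound) auto
  have "2*pi*d*(cmod (f z))\<^sup>2 = d * norm (contour_integral (rectpath a1 a3) g)"
    unfolding ci by (simp add: norm_mult norm_power)
  also have "\<dots> \<le> d * norm (contour_integral (linepath a1 a2) g) + d * norm (contour_integral (linepath a2 a3) g)
      + d * norm (contour_integral (linepath a3 a4) g) + d * norm (contour_integral (linepath a4 a1) g)"
    unfolding sum distrib_left[symmetric] using d by (intro mult_left_mono norm_triangle_le) (auto intro: norm_triangle_le add_mono)
  finally have ineq: "ennreal (2*pi*d*(cmod (f z))\<^sup>2) \<le> ennreal (d * norm (contour_integral (linepath a1 a2) g)) + ennreal (d * norm (contour_integral (linepath a2 a3) g))
      + ennreal (d * norm (contour_integral (linepath a3 a4) g)) + ennreal (d * norm (contour_integral (linepath a4 a1) g))"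
    using d by (simp add: ennreal_plus[symmetric] del: ennreal_plus)
  also have "\<dots> \<le> ennreal (cmod (a2 - a1)) * (\<integral>\<^sup>+t. ennreal (G (linepath a1 a2 t)) * indicator {0..1} t \<partial>lborel)
     + ennreal (cmod (a3 - a2)) * (\<integral>\<^sup>+t. ennreal (G (linepath a2 a3 t)) * indicator {0..1} t \<partial>lborel)
     + ennreal (cmod (a4 - a3)) * (\<integral>\<^sup>+t. ennreal (G (linepath a3 a4 t)) * indicator {0..1} t \<partial>lborel)
     + ennreal (cmod (a1 - a4)) * (\<integral>\<^sup>+t. ennreal (G (linepath a4 a1 t)) * indicator {0..1} t \<partial>lborel)"
    by (intro add_mono lb s12 s23 s34 s41)
  also have "\<dots> = ennreal (x2 - x1) * (\<integral>\<^sup>+t. ennreal ((cmod (f (Complex ((1-t)*x1 + t*x2) (y-1))))\<^sup>2) * indicator {0..1} t \<partial>lborel)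
   + ennreal 2 * (\<integral>\<^sup>+t. ennreal ((cmod (f (Complex x2 ((1-t)*(y-1) + t*(y+1)))))\<^sup>2) * indicator {0..1} t \<partial>lborel)
   + ennreal (x2 - x1) * (\<integral>\<^sup>+t. ennreal ((cmod (f (Complex ((1-t)*x2 + t*x1) (y+1))))\<^sup>2) * indicator {0..1} t \<partial>lborel)
   + ennreal 2 * (\<integral>\<^sup>+t. ennreal ((cmod (f (Complex x1 ((1-t)*(y+1) + t*(y-1)))))\<^sup>2) * indicator {0..1} t \<partial>lborel)"
  proof -
    have l: "linepath a1 a2 t = Complex ((1-t)*x1 + t*x2) (y-1)" "linepath a2 a3 t = Complex x2 ((1-t)*(y-1) + t*(y+1))"
      "linepath a3 a4 t = Complex ((1-t)*x2 + t*x1) (y+1)" "linepath a4 a1 t = Complex x1 ((1-t)*(y+1) + t*(y-1))" for t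
      by (simp_all add: linepath_def a1_def a2_def a3_def a4_def complex_eq_iff algebra_simps)
    have m: "cmod (a2 - a1) = x2 - x1" "cmod (a3 - a2) = 2" "cmod (a4 - a3) = x2 - x1" "cmod (a1 - a4) = 2"
      using x1 by (simp_all add: a1_def a2_def a3_def a4_def cmod_def)
    show ?thesis unfolding l m G_def by simp
  qed
  finally show ?thesis unfolding z_def .
qed

lemma S_meas[measurable]:
  fixes F :: "complex \<Rightarrow> ennreal"
  assumes [measurable]: "F \<in> borel_measurable borel"
  shows "(\<lambda>x. \<integral>\<^sup>+y. F (Complex x y) \<partial>lborel) \<in> borel_measurable borel"
  by measurable

lemma transl:
  fixes g :: "real \<Rightarrow> ennreal"
  assumes [measurable]: "g \<in> borel_measurable borel"
  shows "(\<integral>\<^sup>+y. g (y + s) \<partial>lborel) = (\<integral>\<^sup>+y. g y \<partial>lborel)"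
  using nn_integral_real_affine[of g 1 s] by (simp add: add.commute)

lemma vert:
  fixes F :: "complex \<Rightarrow> ennreal" and h :: "real \<Rightarrow> real"
  assumes [measurable]: "F \<in> borel_measurable borel" "h \<in> borel_measurable borel"
  shows "(\<integral>\<^sup>+y. \<integral>\<^sup>+t. F (Complex p (y + h t)) * indicator {0..1} t \<partial>lborel \<partial>lborel) = (\<integral>\<^sup>+y. F (Complex p y) \<partial>lborel)"
proof -
  have "(\<integral>\<^sup>+y. \<integral>\<^sup>+t. F (Complex p (y + h t)) * indicator {0..1} t \<partial>lborel \<partial>lborel)
      = (\<integral>\<^sup>+t. \<integral>\<^sup>+y. F (Complex p (y + h t)) * indicator {0..1} t \<partial>lborel \<partial>lborel)"
    by (rule lborel_pair.Fubini') measurable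
  also have "\<dots> = (\<integral>\<^sup>+(t::real). (\<integral>\<^sup>+y. F (Complex p y) \<partial>lborel) * indicator {0..1} t \<partial>lborel)"
  proof (rule nn_integral_cong)
    fix t :: real
    have "(\<integral>\<^sup>+y. F (Complex p (y + h t)) * indicator {0..1} t \<partial>lborel) = (\<integral>\<^sup>+y. F (Complex p (y + h t)) \<partial>lborel) * indicator {0..1} t"
      by (rule nn_integral_multc) measurable
    also have "(\<integral>\<^sup>+y. F (Complex p (y + h t)) \<partial>lborel) = (\<integral>\<^sup>+y. F (Complex p y) \<partial>lborel)"
      by (rule transl[where g="\<lambda>y. F (Complex p y)"]) measurable
    finally show "(\<integral>\<^sup>+y. F (Complex p (y + h t)) * indicator {0..1} t \<partial>lborel) = (\<integral>\<^sup>+y. F (Complex p y) \<partial>lborel) * indicator {0..1} t" .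
  qed
  also have "\<dots> = (\<integral>\<^sup>+y. F (Complex p y) \<partial>lborel)"
    using nn_integral_cmult_indicator[of "{0..1::real}" lborel "\<integral>\<^sup>+y. F (Complex p y) \<partial>lborel"]
    by (simp add: mult.commute)
  finally show ?thesis .
qed

lemma horiz:
  fixes F :: "complex \<Rightarrow> ennreal" and k :: "real \<Rightarrow> real"
  assumes [measurable]: "F \<in> borel_measurable borel" "k \<in> borel_measurable borel"
  shows "(\<integral>\<^sup>+y. \<integral>\<^sup>+t. F (Complex (k t) (y + s)) * indicator {0..1} t \<partial>lborel \<partial>lborel)
     = (\<integral>\<^sup>+(t::real). (\<integral>\<^sup>+y. F (Complex (k t) y) \<partial>lborel) * indicator {0..1} t \<partial>lborel)"
proof -
  have "(\<integral>\<^sup>+y. \<integral>\<^sup>+t. F (Complex (k t) (y + s)) * indicator {0..1} t \<partial>lborel \<partial>lborel)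
      = (\<integral>\<^sup>+t. \<integral>\<^sup>+y. F (Complex (k t) (y + s)) * indicator {0..1} t \<partial>lborel \<partial>lborel)"
    by (rule lborel_pair.Fubini') measurable
  also have "\<dots> = (\<integral>\<^sup>+(t::real). (\<integral>\<^sup>+y. F (Complex (k t) y) \<partial>lborel) * indicator {0..1} t \<partial>lborel)"
  proof (rule nn_integral_cong)
    fix t :: real
    have "(\<integral>\<^sup>+y. F (Complex (k t) (y + s)) * indicator {0..1} t \<partial>lborel) = (\<integral>\<^sup>+y. F (Complex (k t) (y + s)) \<partial>lborel) * indicator {0..1} t"
      by (rule nn_integral_multc) measurable
    also have "(\<integral>\<^sup>+y. F (Complex (k t) (y + s)) \<partial>lborel) = (\<integral>\<^sup>+y. F (Complex (k t) y) \<partial>lborel)"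
      by (rule transl[where g="\<lambda>y. F (Complex (k t) y)"]) measurable
    finally show "(\<integral>\<^sup>+y. F (Complex (k t) (y + s)) * indicator {0..1} t \<partial>lborel) = (\<integral>\<^sup>+y. F (Complex (k t) y) \<partial>lborel) * indicator {0..1} t" .
  qed
  finally show ?thesis .
qed

lemma strip_finite:
  fixes f :: "complex \<Rightarrow> complex" and \<alpha> c :: real
  assumes hol: "f holomorphic_on {w. 0 < Re w}" and al: "-1 < \<alpha>" "\<alpha> < 0" and c: "0 < c"
    and N: "(\<integral>\<^sup>+z. ennreal ((cmod (f z))\<^sup>2 * Re z powr \<alpha>) * indicator {z. 0 < Re z} z \<partial>lborel) < top"
  shows "(\<integral>\<^sup>+z. ennreal ((cmod (f z))\<^sup>2 * (Re z - c) powr \<alpha>) * indicator {z. c < Re z} z \<partial>lborel) < top"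
proof -
  define F where "F = (\<lambda>z. ennreal ((cmod (f z))\<^sup>2) * indicator {w. 0 < Re w} z)"
  have cf: "continuous_on {w. 0 < Re w} f" using hol holomorphic_on_imp_continuous_on by blast
  have Fm[measurable]: "F \<in> borel_measurable borel" unfolding F_def
    by (intro meas_ind open_halfplane continuous_intros cf)
  define S where "S = (\<lambda>x. \<integral>\<^sup>+y. F (Complex x y) \<partial>lborel)"
  have Sm[measurable]: "S \<in> borel_measurable borel" unfolding S_def by (rule S_meas[OF Fm])
  define W where "W = (\<integral>\<^sup>+x. ennreal (x powr \<alpha>) * S x * indicator {0<..} x \<partial>lborel)"
  have Nm[measurable]: "(\<lambda>z. ennreal ((cmod (f z))\<^sup>2 * Re z powr \<alpha>) * indicator {z. 0 < Re z} z) \<in> borel_measurable borel"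
    by (intro meas_ind open_halfplane continuous_intros cf) auto
  have W: "W < top"
  proof -
    have "(\<integral>\<^sup>+z. ennreal ((cmod (f z))\<^sup>2 * Re z powr \<alpha>) * indicator {z. 0 < Re z} z \<partial>lborel)
       = (\<integral>\<^sup>+x. \<integral>\<^sup>+y. ennreal ((cmod (f (Complex x y)))\<^sup>2 * Re (Complex x y) powr \<alpha>) * indicator {z. 0 < Re z} (Complex x y) \<partial>lborel \<partial>lborel)"
      by (rule nn_integral_complex[OF Nm])
    also have "\<dots> = W" unfolding W_def
    proof (rule nn_integral_cong)
      fix x :: real
      show "(\<integral>\<^sup>+y. ennreal ((cmod (f (Complex x y)))\<^sup>2 * Re (Complex x y) powr \<alpha>) * indicator {z. 0 < Re z} (Complex x y) \<partial>lborel)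
         = ennreal (x powr \<alpha>) * S x * indicator {0<..} x"
      proof (cases "0 < x")
        case True
        have "(\<integral>\<^sup>+y. ennreal ((cmod (f (Complex x y)))\<^sup>2 * Re (Complex x y) powr \<alpha>) * indicator {z. 0 < Re z} (Complex x y) \<partial>lborel)
            = (\<integral>\<^sup>+y. ennreal (x powr \<alpha>) * F (Complex x y) \<partial>lborel)"
          using True by (intro nn_integral_cong) (simp add: F_def ennreal_mult' mult.commute)
        also have "\<dots> = ennreal (x powr \<alpha>) * S x" unfolding S_def by (rule nn_integral_cmult) measurable
        finally show ?thesis using True by simp
      next
        case False
        then show ?thesis by simp
      qed
    qed
    finally show ?thesis using N by simp
  qed
  have pick: "\<exists>x\<in>{l..u}. S x < top" if lu: "0 < l" "l < u" for l u
  proof (rule ccontr)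
    assume "\<not> (\<exists>x\<in>{l..u}. S x < top)"
    then have inf: "x \<in> {l..u} \<Longrightarrow> S x = top" for x
      by (metis top.not_eq_extremum)
    have "(\<integral>\<^sup>+x. top * indicator {l..u} x \<partial>lborel) \<le> W" unfolding W_def
    proof (rule nn_integral_mono)
      fix x :: real
      show "top * indicator {l..u} x \<le> ennreal (x powr \<alpha>) * S x * indicator {0<..} x"
      proof (cases "x \<in> {l..u}")
        case True
        then have "0 < x" using lu by auto
        then show ?thesis using True inf[OF True] by (simp add: ennreal_mult_top)
      qed simp
    qed
    moreover have "(\<integral>\<^sup>+x. top * indicator {l..u} x \<partial>lborel) = top"
    proof -
      have "(\<integral>\<^sup>+x. top * indicator {l..u} x \<partial>lborel) = top * emeasure lborel {l..u}"
        by (rule nn_integral_cmult_indicator) simp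
      also have "\<dots> = top" using lu by (simp add: ennreal_top_mult)
      finally show ?thesis .
    qed
    ultimately show False using W by simp
  qed
  obtain x1 where x1: "x1 \<in> {c/4..c/2}" "S x1 < top" using pick[of "c/4" "c/2"] c by auto
  obtain x2 where x2: "x2 \<in> {5*c/2..3*c}" "S x2 < top" using pick[of "5*c/2" "3*c"] c by auto
  have hfin: "(\<integral>\<^sup>+t. S (p + t*(q-p)) * indicator {0..1} t \<partial>lborel) < top"
    if pq: "0 < p" "p \<le> 3*c" "0 < q" "q \<le> 3*c" "p \<noteq> q" for p q
  proof -
    define M where "M = (3*c) powr (-\<alpha>)"
    define Fw where "Fw = (\<lambda>s. ennreal (s powr \<alpha>) * S s * indicator {0<..} s)"
    have Fwm[measurable]: "Fw \<in> borel_measurable borel" unfolding Fw_def by measurable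
    have "(\<integral>\<^sup>+t. S (p + t*(q-p)) * indicator {0..1} t \<partial>lborel) \<le> (\<integral>\<^sup>+t. ennreal M * Fw (p + (q-p)*t) \<partial>lborel)"
    proof (rule nn_integral_mono)
      fix t :: real
      show "S (p + t*(q-p)) * indicator {0..1} t \<le> ennreal M * Fw (p + (q-p)*t)"
      proof (cases "t \<in> {0..1}")
        case True
        define s where "s = p + t*(q-p)"
        have se: "s = (1-t)*p + t*q" by (simp add: s_def algebra_simps)
        have s0: "0 < s"
        proof (cases "t < 1")
          case True
          then have "0 < (1-t)*p" using pq by simp
          moreover have "0 \<le> t*q" using \<open>t \<in> {0..1}\<close> pq by simp
          ultimately show ?thesis unfolding se by linarith
        next
          case False
          then show ?thesis using \<open>t \<in> {0..1}\<close> pq se by simp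
        qed
        have s3: "s \<le> 3*c"
        proof -
          have "(1-t)*p \<le> (1-t)*(3*c)" using True pq by (intro mult_left_mono) auto
          moreover have "t*q \<le> t*(3*c)" using True pq by (intro mult_left_mono) auto
          ultimately show ?thesis unfolding se by (simp add: algebra_simps)
        qed
        have "(3*c) powr \<alpha> \<le> s powr \<alpha>" using s0 s3 al by (intro powr_mono2') auto
        then have "M * (3*c) powr \<alpha> \<le> M * s powr \<alpha>" unfolding M_def by (intro mult_left_mono) auto
        moreover have "M * (3*c) powr \<alpha> = 1" unfolding M_def using c by (simp add: powr_minus)
        ultimately have "1 \<le> M * s powr \<alpha>" by simp
        then have "S s \<le> ennreal (M * s powr \<alpha>) * S s"
          using mult_right_mono[of 1 "ennreal (M * s powr \<alpha>)" "S s"] by simp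
        then show ?thesis using True s0 unfolding s_def Fw_def
          by (simp add: ennreal_mult' M_def mult.assoc mult.commute mult.left_commute)
      qed simp
    qed
    also have "\<dots> = ennreal M * (\<integral>\<^sup>+t. Fw (p + (q-p)*t) \<partial>lborel)"
      by (rule nn_integral_cmult) measurable
    also have "(\<integral>\<^sup>+t. Fw (p + (q-p)*t) \<partial>lborel) < top"
    proof -
      have "W = ennreal \<bar>q-p\<bar> * (\<integral>\<^sup>+t. Fw (p + (q-p)*t) \<partial>lborel)"
        unfolding W_def using pq by (subst nn_integral_real_affine[where c="q-p" and t=p]) (auto simp: Fw_def)
      then show ?thesis using W pq by (auto simp: ennreal_mult_less_top top.not_eq_extremum)
    qed
    then have "ennreal M * (\<integral>\<^sup>+t. Fw (p + (q-p)*t) \<partial>lborel) < top"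
      by (simp add: ennreal_mult_less_top)
    finally show ?thesis .
  qed
  have x12: "0 < x1" "x1 < x2" "x1 \<le> c/2" "5*c/2 \<le> x2" "x2 \<le> 3*c" using x1 x2 c by auto
  define d where "d = min (c/2) 1"
  have d: "0 < d" "d \<le> c/2" "d \<le> 1" using c by (auto simp: d_def)
  define T1 where "T1 = (\<integral>\<^sup>+t. S (x1 + t*(x2-x1)) * indicator {0..1} t \<partial>lborel)"
  define T3 where "T3 = (\<integral>\<^sup>+t. S (x2 + t*(x1-x2)) * indicator {0..1} t \<partial>lborel)"
  have T1: "T1 < top" unfolding T1_def using x12 by (intro hfin) auto
  have T3: "T3 < top" unfolding T3_def using x12 by (intro hfin) auto
  define Kc where "Kc = ennreal (x2-x1) * T1 + 2 * S x2 + ennreal (x2-x1) * T3 + 2 * S x1"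
  have Kc: "Kc < top" unfolding Kc_def using T1 T3 x1 x2 by (simp add: ennreal_mult_less_top)
  define J1 where "J1 = (\<lambda>y. \<integral>\<^sup>+t. F (Complex (x1 + t*(x2-x1)) (y + -1)) * indicator {0..1} t \<partial>lborel)"
  define J2 where "J2 = (\<lambda>y. \<integral>\<^sup>+t. F (Complex x2 (y + (2*t-1))) * indicator {0..1} t \<partial>lborel)"
  define J3 where "J3 = (\<lambda>y. \<integral>\<^sup>+t. F (Complex (x2 + t*(x1-x2)) (y + 1)) * indicator {0..1} t \<partial>lborel)"
  define J4 where "J4 = (\<lambda>y. \<integral>\<^sup>+t. F (Complex x1 (y + (1-2*t))) * indicator {0..1} t \<partial>lborel)"
  have Jm[measurable]: "J1 \<in> borel_measurable borel" "J2 \<in> borel_measurable borel"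
    "J3 \<in> borel_measurable borel" "J4 \<in> borel_measurable borel"
    unfolding J1_def J2_def J3_def J4_def by measurable
  have IJ1: "(\<integral>\<^sup>+y. J1 y \<partial>lborel) = T1" unfolding J1_def T1_def S_def
    by (rule horiz) measurable
  have IJ3: "(\<integral>\<^sup>+y. J3 y \<partial>lborel) = T3" unfolding J3_def T3_def S_def
    by (rule horiz) measurable
  have IJ2: "(\<integral>\<^sup>+y. J2 y \<partial>lborel) = S x2" unfolding J2_def S_def
    by (rule vert) measurable
  have IJ4: "(\<integral>\<^sup>+y. J4 y \<partial>lborel) = S x1" unfolding J4_def S_def
    by (rule vert) measurable
  have Sb: "S x \<le> ennreal (1/(2*pi*d)) * Kc" if xin: "x \<in> {c..2*c}" for x
  proof -
    have x0: "0 < x" using xin c by auto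
    have pw: "ennreal (2*pi*d*(cmod (f (Complex x y)))\<^sup>2) \<le>
        ennreal (x2-x1) * J1 y + ennreal 2 * J2 y + ennreal (x2-x1) * J3 y + ennreal 2 * J4 y" for y
    proof -
      have e1: "(\<integral>\<^sup>+t. ennreal ((cmod (f (Complex ((1-t)*x1 + t*x2) (y-1))))\<^sup>2) * indicator {0..1} t \<partial>lborel) = J1 y"
        unfolding J1_def
      proof (rule nn_integral_cong)
        fix t :: real
        show "ennreal ((cmod (f (Complex ((1-t)*x1 + t*x2) (y-1))))\<^sup>2) * indicator {0..1} t
           = F (Complex (x1 + t*(x2-x1)) (y + -1)) * indicator {0..1} t"
        proof (cases "t \<in> {0..1}")
          case True
          have "0 < x1 + t*(x2-x1)" using True x12 by (intro add_pos_nonneg) auto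
          then show ?thesis using True by (simp add: F_def algebra_simps)
        qed simp
      qed
      have e3: "(\<integral>\<^sup>+t. ennreal ((cmod (f (Complex ((1-t)*x2 + t*x1) (y+1))))\<^sup>2) * indicator {0..1} t \<partial>lborel) = J3 y"
        unfolding J3_def
      proof (rule nn_integral_cong)
        fix t :: real
        show "ennreal ((cmod (f (Complex ((1-t)*x2 + t*x1) (y+1))))\<^sup>2) * indicator {0..1} t
           = F (Complex (x2 + t*(x1-x2)) (y + 1)) * indicator {0..1} t"
        proof (cases "t \<in> {0..1}")
          case True
          have "(1-t)*x1 \<le> (1-t)*x2" using True x12 by (intro mult_left_mono) auto
          then have "0 < (1-t)*x2 + t*x1" using x12 by (simp add: algebra_simps)
          then show ?thesis using True by (simp add: F_def algebra_simps)
        qed simp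
      qed
      have e2: "(\<integral>\<^sup>+t. ennreal ((cmod (f (Complex x2 ((1-t)*(y-1) + t*(y+1)))))\<^sup>2) * indicator {0..1} t \<partial>lborel) = J2 y"
        unfolding J2_def
        by (rule nn_integral_cong) (use x12 in \<open>simp add: F_def algebra_simps\<close>)
      have e4: "(\<integral>\<^sup>+t. ennreal ((cmod (f (Complex x1 ((1-t)*(y+1) + t*(y-1)))))\<^sup>2) * indicator {0..1} t \<partial>lborel) = J4 y"
        unfolding J4_def
        by (rule nn_integral_cong) (use x12 in \<open>simp add: F_def algebra_simps\<close>)
      show ?thesis
        using pointwise[OF hol x12(1), of x x2 d y] xin x12 d unfolding e1 e2 e3 e4 by simp
    qed
    have "ennreal (2*pi*d) * S x = (\<integral>\<^sup>+y. ennreal (2*pi*d) * F (Complex x y) \<partial>lborel)"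
      unfolding S_def by (rule nn_integral_cmult[symmetric]) measurable
    also have "\<dots> = (\<integral>\<^sup>+y. ennreal (2*pi*d*(cmod (f (Complex x y)))\<^sup>2) \<partial>lborel)"
      using x0 d by (intro nn_integral_cong) (simp add: F_def ennreal_mult)
    also have "\<dots> \<le> (\<integral>\<^sup>+y. ennreal (x2-x1) * J1 y + ennreal 2 * J2 y + ennreal (x2-x1) * J3 y + ennreal 2 * J4 y \<partial>lborel)"
      by (rule nn_integral_mono) (rule pw)
    also have "\<dots> = Kc"
      unfolding Kc_def
      by (simp add: nn_integral_add nn_integral_cmult IJ1 IJ2 IJ3 IJ4)
    finally have le: "ennreal (2*pi*d) * S x \<le> Kc" .
    have "S x = ennreal (1/(2*pi*d)) * (ennreal (2*pi*d) * S x)"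
      using d by (simp add: ennreal_mult[symmetric] mult.assoc[symmetric])
    also have "\<dots> \<le> ennreal (1/(2*pi*d)) * Kc" by (rule mult_left_mono[OF le]) simp
    finally show ?thesis .
  qed
  define K where "K = ennreal (1/(2*pi*d)) * Kc"
  have K: "K < top" unfolding K_def using Kc by (simp add: ennreal_mult_less_top)
  have powint: "(\<integral>\<^sup>+x. ennreal ((x - c) powr \<alpha>) * indicator {c<..<2*c} x \<partial>lborel) < top"
  proof -
    have "(\<integral>\<^sup>+x. ennreal ((x - c) powr \<alpha>) * indicator {c<..<2*c} x \<partial>lborel)
        = (\<integral>\<^sup>+x. ennreal (((x + c) - c) powr \<alpha>) * indicator {c<..<2*c} (x + c) \<partial>lborel)"
      by (rule transl[symmetric, where g="\<lambda>x. ennreal ((x - c) powr \<alpha>) * indicator {c<..<2*c} x"]) measurable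
    also have "\<dots> \<le> (\<integral>\<^sup>+x. ennreal (x powr \<alpha>) * indicator {0..c} x \<partial>lborel)"
      by (rule nn_integral_mono) (auto simp: indicator_def)
    also have "\<dots> = ennreal (c powr (\<alpha>+1) / (\<alpha>+1))"
      using has_integral_powr_from_0[of \<alpha> c] al c by (intro nn_integral_has_integral_lebesgue') auto
    finally show ?thesis using ennreal_less_top le_less_trans by blast
  qed
  have strip: "(\<integral>\<^sup>+z. (ennreal ((Re z - c) powr \<alpha>) * indicator {c<..<2*c} (Re z)) * F z \<partial>lborel) < top"
  proof -
    have "(\<integral>\<^sup>+z. (ennreal ((Re z - c) powr \<alpha>) * indicator {c<..<2*c} (Re z)) * F z \<partial>lborel)
       = (\<integral>\<^sup>+x. \<integral>\<^sup>+y. (ennreal ((Re (Complex x y) - c) powr \<alpha>) * indicator {c<..<2*c} (Re (Complex x y))) * F (Complex x y) \<partial>lborel \<partial>lborel)"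
      by (rule nn_integral_complex) measurable
    also have "\<dots> = (\<integral>\<^sup>+x. (ennreal ((x - c) powr \<alpha>) * indicator {c<..<2*c} x) * S x \<partial>lborel)"
      unfolding S_def by (intro nn_integral_cong) (simp, rule nn_integral_cmult, measurable)
    also have "\<dots> \<le> (\<integral>\<^sup>+x. (ennreal ((x - c) powr \<alpha>) * indicator {c<..<2*c} x) * K \<partial>lborel)"
    proof (rule nn_integral_mono)
      fix x :: real
      show "(ennreal ((x - c) powr \<alpha>) * indicator {c<..<2*c} x) * S x \<le> (ennreal ((x - c) powr \<alpha>) * indicator {c<..<2*c} x) * K"
        using Sb[of x] unfolding K_def by (cases "x \<in> {c<..<2*c}") (auto intro: mult_left_mono)
    qed
    also have "\<dots> = (\<integral>\<^sup>+x. ennreal ((x - c) powr \<alpha>) * indicator {c<..<2*c} x \<partial>lborel) * K"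
      by (rule nn_integral_multc) measurable
    also have "\<dots> < top" using powint K by (simp add: ennreal_mult_less_top)
    finally show ?thesis .
  qed
  have "(\<integral>\<^sup>+z. ennreal ((cmod (f z))\<^sup>2 * (Re z - c) powr \<alpha>) * indicator {z. c < Re z} z \<partial>lborel)
     \<le> (\<integral>\<^sup>+z. ennreal (2 powr (-\<alpha>)) * (ennreal ((cmod (f z))\<^sup>2 * Re z powr \<alpha>) * indicator {z. 0 < Re z} z)
          + (ennreal ((Re z - c) powr \<alpha>) * indicator {c<..<2*c} (Re z)) * F z \<partial>lborel)"
  proof (rule nn_integral_mono)
    fix z :: complex
    define r where "r = Re z"
    show "ennreal ((cmod (f z))\<^sup>2 * (Re z - c) powr \<alpha>) * indicator {z. c < Re z} z
       \<le> ennreal (2 powr (-\<alpha>)) * (ennreal ((cmod (f z))\<^sup>2 * Re z powr \<alpha>) * indicator {z. 0 < Re z} z)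
          + (ennreal ((Re z - c) powr \<alpha>) * indicator {c<..<2*c} (Re z)) * F z"
    proof (cases "c < r")
      case False then show ?thesis by (simp add: r_def[symmetric])
    next
      case True
      show ?thesis
      proof (cases "r < 2*c")
        case True2: True
        have "ennreal ((cmod (f z))\<^sup>2 * (Re z - c) powr \<alpha>) * indicator {z. c < Re z} z
            = (ennreal ((Re z - c) powr \<alpha>) * indicator {c<..<2*c} (Re z)) * F z"
          using True True2 c by (simp add: r_def F_def ennreal_mult' mult.commute)
        then show ?thesis by (simp add: add_increasing)
      next
        case False2: False
        have "(r - c) powr \<alpha> \<le> (r/2) powr \<alpha>" using False2 c al by (intro powr_mono2') auto
        also have "(r/2) powr \<alpha> = r powr \<alpha> / 2 powr \<alpha>"
          using True c by (simp add: powr_divide)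
        also have "\<dots> = 2 powr (-\<alpha>) * r powr \<alpha>"
          by (simp add: powr_minus_divide)
        finally have "(cmod (f z))\<^sup>2 * (r - c) powr \<alpha> \<le> (cmod (f z))\<^sup>2 * (2 powr (-\<alpha>) * r powr \<alpha>)"
          by (rule mult_left_mono) simp
        then have "(cmod (f z))\<^sup>2 * (r - c) powr \<alpha> \<le> 2 powr (-\<alpha>) * ((cmod (f z))\<^sup>2 * r powr \<alpha>)"
          by (simp only: ac_simps)
        then have "ennreal ((cmod (f z))\<^sup>2 * (r - c) powr \<alpha>) \<le> ennreal (2 powr (-\<alpha>)) * ennreal ((cmod (f z))\<^sup>2 * r powr \<alpha>)"
          by (simp add: ennreal_mult'[symmetric] ennreal_leI)
        then show ?thesis using True c unfolding r_def by (simp add: add_increasing2)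
      qed
    qed
  qed
  also have "\<dots> = ennreal (2 powr (-\<alpha>)) * (\<integral>\<^sup>+z. ennreal ((cmod (f z))\<^sup>2 * Re z powr \<alpha>) * indicator {z. 0 < Re z} z \<partial>lborel)
      + (\<integral>\<^sup>+z. (ennreal ((Re z - c) powr \<alpha>) * indicator {c<..<2*c} (Re z)) * F z \<partial>lborel)"
    by (simp add: nn_integral_add nn_integral_cmult)
  also have "\<dots> < top" using N strip by (simp add: ennreal_mult_less_top)
  finally show ?thesis .
qed

lemma pos_J:
  fixes f :: "complex \<Rightarrow> complex" and C \<alpha> :: real
  assumes hol: "f holomorphic_on {w. 0 < Re w}" and C: "0 \<le> C" and nz: "\<exists>z. 0 < Re z \<and> f z \<noteq> 0"
  shows "0 < (\<integral>\<^sup>+z. ennreal ((cmod (f z))\<^sup>2 * min ((Re z - C) powr \<alpha>) (Re z powr \<alpha>)) * indicator {z. C < Re z} z \<partial>lborel)"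
proof -
  let ?g = "\<lambda>z. ennreal ((cmod (f z))\<^sup>2 * min ((Re z - C) powr \<alpha>) (Re z powr \<alpha>)) * indicator {z. C < Re z} z"
  have cf: "continuous_on {w. 0 < Re w} f" using hol holomorphic_on_imp_continuous_on by blast
  have cfC: "continuous_on {w. C < Re w} f" using C by (intro continuous_on_subset[OF cf]) auto
  obtain z0 where z0: "C < Re z0" "f z0 \<noteq> 0"
  proof (rule ccontr)
    assume "\<not> thesis"
    with that have zero: "\<And>z. z \<in> {w. C < Re w} \<Longrightarrow> f z = 0" by blast
    have "f w = 0" if "0 < Re w" for w
    proof (rule analytic_continuation[OF hol])
      show "open {w::complex. 0 < Re w}" by (rule open_halfplane)
      show "connected {w::complex. 0 < Re w}" by (rule convex_connected[OF convex_halfspace_Re_gt])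
      show "{w. C < Re w} \<subseteq> {w::complex. 0 < Re w}" using C by auto
      show "Complex (C+1) 0 \<in> {w. 0 < Re w}" using C by simp
      show "Complex (C+1) 0 islimpt {w. C < Re w}"
        using interior_limit_point[of "Complex (C+1) 0" "{w. C < Re w}"] by (simp add: interior_open open_halfplane)
      show "\<And>z. z \<in> {w. C < Re w} \<Longrightarrow> f z = 0" by (rule zero)
      show "w \<in> {w. 0 < Re w}" using that by simp
    qed
    then show False using nz by auto
  qed
  have gm: "?g \<in> borel_measurable borel"
    by (intro meas_ind open_halfplane continuous_intros cfC) (use C in auto)
  have "open ({w. C < Re w} \<inter> f -` (- {0}))"
    by (intro continuous_open_preimage cfC open_halfplane) auto
  moreover have "z0 \<in> {w. C < Re w} \<inter> f -` (- {0})" using z0 by auto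
  ultimately obtain e where e: "0 < e" "ball z0 e \<subseteq> {w. C < Re w} \<inter> f -` (- {0})"
    by (rule openE)
  have gpos: "?g z \<noteq> 0" if "z \<in> ball z0 e" for z
  proof -
    have "C < Re z" "f z \<noteq> 0" using e that by auto
    then have "0 < (cmod (f z))\<^sup>2 * min ((Re z - C) powr \<alpha>) (Re z powr \<alpha>)" using C by auto
    then have "ennreal ((cmod (f z))\<^sup>2 * min ((Re z - C) powr \<alpha>) (Re z powr \<alpha>)) \<noteq> 0"
      using ennreal_eq_0_iff not_le by blast
    moreover have "indicator {z. C < Re z} z = (1::ennreal)" using \<open>C < Re z\<close> by simp
    ultimately show ?thesis by (metis mult.right_neutral)
  qed
  show ?thesis
  proof (rule ccontr)
    assume "\<not> ?thesis"
    then have "(\<integral>\<^sup>+z. ?g z \<partial>lborel) = 0" by (simp add: not_less)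
    then have "AE z in lborel. ?g z = 0" using nn_integral_0_iff_AE[of ?g lborel] gm by simp
    then have "AE z in lborel. z \<notin> ball z0 e" by (rule AE_mp) (use gpos in auto)
    then have "emeasure lborel (ball z0 e) = 0"
      by (subst (asm) AE_iff_measurable[where N="ball z0 e"]) auto
    then have "measure lborel (ball z0 e) = 0" by (simp add: measure_def)
    then show False using e content_ball_gt_0_iff[of z0 e] by simp
  qed
qed

theorem mainTheorem2:
  fixes \<alpha> a :: real and b :: complex and f :: "complex \<Rightarrow> complex"
  assumes "\<alpha> > -1" and "0 < a" and "a < 1" and "Re b \<ge> 0"
    and "f \<in> bergman_space \<alpha>"
  shows "\<exists>\<delta>>0. \<forall>\<^sub>F n in sequentially.
           bergman_norm \<alpha> ((comp_op (\<lambda>w. complex_of_real a * w + b) ^^ n) f)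
             \<ge> \<delta> * a powr (- ((\<alpha> + 2) / 2) * real n) * bergman_norm \<alpha> f"
proof -
  note al = assms(1) and a = assms(2,3) and b = assms(4)
  define \<phi> where "\<phi> = (\<lambda>w. complex_of_real a * w + b)"
  define D where "D = (\<lambda>n. (\<phi> ^^ n) 0)"
  define C where "C = Re b / (1 - a)"
  have C0: "0 \<le> C" using a b by (simp add: C_def)
  have h0: "f holomorphic_on right_half_plane \<and> bergman_nn \<alpha> f < \<infinity>" using assms(5) unfolding bergman_space_def mem_Collect_eq .
  have h: "f holomorphic_on right_half_plane" "bergman_nn \<alpha> f < \<infinity>" using h0 by auto
  have hol: "f holomorphic_on {w. 0 < Re w}" using h(1) unfolding rhp_eq .
  have bfin: "bergman_nn \<alpha> f < top" using h(2) unfolding infinity_ennreal_def .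
  have cf: "continuous_on {w. 0 < Re w} f" using hol holomorphic_on_imp_continuous_on by blast
  define Nf where "Nf = (\<integral>\<^sup>+z. ennreal ((cmod (f z))\<^sup>2 * Re z powr \<alpha>) * indicator {z. 0 < Re z} z \<partial>lborel)"
  have bnfe: "bergman_nn \<alpha> f = ennreal (1/pi) * Nf" by (simp add: bergman_nn_def rhp_eq Nf_def)
  have Nf: "Nf < top"
  proof -
    have "ennreal (1/pi) * Nf < top" using bfin unfolding bnfe .
    then show ?thesis by (auto simp: ennreal_mult_less_top)
  qed
  have Dn: "0 \<le> Re (D n) \<and> Re (D n) \<le> C" for n
    unfolding D_def \<phi>_def C_def using iter_affine_Re[OF a b] by blast
  have iter: "(comp_op \<phi> ^^ n) f = (\<lambda>w. f (complex_of_real (a^n) * w + D n))" for n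
    unfolding iter_comp D_def \<phi>_def by (subst iter_affine) simp
  define In where "In = (\<lambda>n. \<integral>\<^sup>+z. ennreal ((cmod (f z))\<^sup>2 * (Re z - Re (D n)) powr \<alpha>) * indicator {z. Re (D n) < Re z} z \<partial>lborel)"
  have bn: "bergman_nn \<alpha> ((comp_op \<phi> ^^ n) f) = ennreal (1/pi) * (ennreal ((a^n) powr (-(\<alpha>+2))) * In n)" for n
    unfolding iter In_def using a Dn[of n] hol by (intro bergman_affine) (auto simp: rhp_eq)
  have Infin: "In n < top" for n
  proof (cases "0 \<le> \<alpha>")
    case True
    have "In n \<le> Nf" unfolding In_def Nf_def
    proof (rule nn_integral_mono)
      fix z :: complex
      show "ennreal ((cmod (f z))\<^sup>2 * (Re z - Re (D n)) powr \<alpha>) * indicator {z. Re (D n) < Re z} z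
          \<le> ennreal ((cmod (f z))\<^sup>2 * Re z powr \<alpha>) * indicator {z. 0 < Re z} z"
      proof (cases "Re (D n) < Re z")
        case True2: True
        have "(Re z - Re (D n)) powr \<alpha> \<le> Re z powr \<alpha>" using True True2 Dn[of n] by (intro powr_mono2) auto
        then have "(cmod (f z))\<^sup>2 * (Re z - Re (D n)) powr \<alpha> \<le> (cmod (f z))\<^sup>2 * Re z powr \<alpha>"
          by (rule mult_left_mono) simp
        then show ?thesis using True2 Dn[of n] by (simp add: ennreal_leI)
      qed simp
    qed
    then show ?thesis using Nf by (meson le_less_trans)
  next
    case False
    show ?thesis
    proof (cases "Re (D n) = 0")
      case True
      then show ?thesis using Nf by (simp add: In_def Nf_def)
    next
      case False2: False
      then have "0 < Re (D n)" using Dn[of n] by simp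
      then show ?thesis unfolding In_def using Nf False al
        by (intro strip_finite[OF hol]) (auto simp: Nf_def)
    qed
  qed
  have nn0: "0 \<le> bergman_norm \<alpha> g" for g by (simp add: bergman_norm_def)
  show ?thesis
  proof (cases "bergman_norm \<alpha> f = 0")
    case True
    show ?thesis unfolding \<phi>_def[symmetric]
      by (rule exI[of _ 1]) (simp add: True nn0)
  next
    case False
    have Nf0: "Nf \<noteq> 0" using False by (auto simp: bergman_norm_def bnfe)
    have nz: "\<exists>z. 0 < Re z \<and> f z \<noteq> 0"
    proof (rule ccontr)
      assume "\<not> ?thesis"
      then have "Nf = (\<integral>\<^sup>+(z::complex). 0 \<partial>lborel)" unfolding Nf_def
        by (intro nn_integral_cong) (auto simp: indicator_def)
      then show False using Nf0 by simp
    qed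
    define J where "J = (\<integral>\<^sup>+z. ennreal ((cmod (f z))\<^sup>2 * min ((Re z - C) powr \<alpha>) (Re z powr \<alpha>)) * indicator {z. C < Re z} z \<partial>lborel)"
    have J0: "0 < J" unfolding J_def by (rule pos_J[OF hol C0 nz])
    have JN: "J \<le> Nf" unfolding J_def Nf_def
    proof (rule nn_integral_mono)
      fix z :: complex
      show "ennreal ((cmod (f z))\<^sup>2 * min ((Re z - C) powr \<alpha>) (Re z powr \<alpha>)) * indicator {z. C < Re z} z
          \<le> ennreal ((cmod (f z))\<^sup>2 * Re z powr \<alpha>) * indicator {z. 0 < Re z} z"
      proof (cases "C < Re z")
        case True
        have "(cmod (f z))\<^sup>2 * min ((Re z - C) powr \<alpha>) (Re z powr \<alpha>) \<le> (cmod (f z))\<^sup>2 * Re z powr \<alpha>"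
          by (rule mult_left_mono) auto
        then show ?thesis using True C0 by (simp add: ennreal_leI)
      qed simp
    qed
    have JI: "J \<le> In n" for n unfolding J_def In_def
    proof (rule nn_integral_mono)
      fix z :: complex
      show "ennreal ((cmod (f z))\<^sup>2 * min ((Re z - C) powr \<alpha>) (Re z powr \<alpha>)) * indicator {z. C < Re z} z
          \<le> ennreal ((cmod (f z))\<^sup>2 * (Re z - Re (D n)) powr \<alpha>) * indicator {z. Re (D n) < Re z} z"
      proof (cases "C < Re z")
        case True
        have m: "min ((Re z - C) powr \<alpha>) (Re z powr \<alpha>) \<le> (Re z - Re (D n)) powr \<alpha>"
        proof (cases "0 \<le> \<alpha>")
          case True2: True
          have "(Re z - C) powr \<alpha> \<le> (Re z - Re (D n)) powr \<alpha>" using True True2 Dn[of n] by (intro powr_mono2) auto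
          then show ?thesis by linarith
        next
          case False2: False
          have "Re z powr \<alpha> \<le> (Re z - Re (D n)) powr \<alpha>" using True False2 Dn[of n] C0
            by (intro powr_mono2') auto
          then show ?thesis by linarith
        qed
        have "(cmod (f z))\<^sup>2 * min ((Re z - C) powr \<alpha>) (Re z powr \<alpha>) \<le> (cmod (f z))\<^sup>2 * (Re z - Re (D n)) powr \<alpha>"
          by (rule mult_left_mono[OF m]) simp
        moreover have "Re (D n) < Re z" using True Dn[of n] by linarith
        ultimately show ?thesis using True by (simp add: ennreal_leI)
      qed simp
    qed
    define eJ where "eJ = enn2real J"
    define eN where "eN = enn2real Nf"
    have Jtop: "J < top" using JN Nf by (rule le_less_trans)
    have eJ: "0 < eJ" unfolding eJ_def using J0 Jtop by (simp add: enn2real_positive_iff)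
    have "0 < Nf" using Nf0 by (simp add: zero_less_iff_neq_zero)
    then have eN: "0 < eN" unfolding eN_def using Nf by (simp add: enn2real_positive_iff)
    define \<delta> where "\<delta> = sqrt (eJ / eN)"
    have \<delta>: "0 < \<delta>" unfolding \<delta>_def using eJ eN by simp
    have main: "\<delta> * a powr (- ((\<alpha> + 2) / 2) * real n) * bergman_norm \<alpha> f \<le> bergman_norm \<alpha> ((comp_op \<phi> ^^ n) f)" for n
    proof -
      define q where "q = a powr (- ((\<alpha> + 2) / 2) * real n)"
      have q0: "0 < q" unfolding q_def using a by simp
      have P: "(a^n) powr (-(\<alpha>+2)) = q\<^sup>2"
      proof -
        have "(a^n) powr (-(\<alpha>+2)) = (a powr real n) powr (-(\<alpha>+2))" using a by (simp add: powr_realpow)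
        also have "\<dots> = a powr (real n * (-(\<alpha>+2)))" by (simp add: powr_powr)
        also have "\<dots> = a powr (- ((\<alpha> + 2) / 2) * real n + - ((\<alpha> + 2) / 2) * real n)" by (simp add: algebra_simps)
        also have "\<dots> = q\<^sup>2" unfolding q_def power2_eq_square by (rule powr_add)
        finally show ?thesis .
      qed
      define eI where "eI = enn2real (In n)"
      have JIe: "eJ \<le> eI" unfolding eJ_def eI_def using JI[of n] Infin[of n] by (intro enn2real_mono) auto
      have nf: "bergman_norm \<alpha> f = sqrt (1/pi * eN)"
        by (simp add: bergman_norm_def bnfe eN_def enn2real_mult)
      have ng: "bergman_norm \<alpha> ((comp_op \<phi> ^^ n) f) = sqrt (1/pi * (q\<^sup>2 * eI))"
        using P by (simp add: bergman_norm_def bn eI_def enn2real_mult)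
      have "(\<delta> * q * sqrt (1/pi * eN))\<^sup>2 = 1/pi * (q\<^sup>2 * eJ)"
        unfolding \<delta>_def using eJ eN by (simp add: power_mult_distrib)
      also have "\<dots> \<le> 1/pi * (q\<^sup>2 * eI)" using JIe by (intro mult_left_mono) auto
      finally have "\<delta> * q * sqrt (1/pi * eN) \<le> sqrt (1/pi * (q\<^sup>2 * eI))" by (rule real_le_rsqrt)
      then show ?thesis unfolding nf ng q_def .
    qed
    show ?thesis unfolding \<phi>_def[symmetric]
      using \<delta> main by (intro exI[of _ \<delta>]) (auto intro: always_eventually)
  qed
qed

end
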